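(* For any $\alpha, \varepsilon \in (0,1]$ there exists $n_0$ such that for all $n \geq n_0$ the following holds. Let $G$ be an $n$-vertex graph with $\alpha \binom{n}{2}$ edges. Then \[\operatorname{ssp}(G) \geq (\sqrt{3 \alpha + 1} - 1 - \varepsilon)n.\]
   Context: A family $\mathcal{P}$ of paths in a graph $G$ is strong-separating if for every ordered pair of distinct edges $e,f$ of $G$ there is a path in $\mathcal{P}$ containing $e$ but not $f$; $\operatorname{ssp}(G)$ is the minimum size of such a family. *)

theory Defs
  imports Complex_Main
begin

definition simple_graph :: "nat \<Rightarrow> nat set set \<Rightarrow> bool" where
  "simple_graph n E \<longleftrightarrow> (\<forall>e\<in>E. \<exists>u v. u < n \<and> v < n \<and> u \<noteq> v \<and> e = {u, v})"

definition path_edges :: "nat list \<Rightarrow> nat set set" where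
  "path_edges vs = set (map (\<lambda>(u, v). {u, v}) (zip vs (tl vs)))"

definition is_path :: "nat \<Rightarrow> nat set set \<Rightarrow> nat set set \<Rightarrow> bool" where
  "is_path n E P \<longleftrightarrow> (\<exists>vs. vs \<noteq> [] \<and> distinct vs \<and> set vs \<subseteq> {..<n}
      \<and> path_edges vs \<subseteq> E \<and> P = path_edges vs)"

definition strong_separating :: "nat \<Rightarrow> nat set set \<Rightarrow> nat set set set \<Rightarrow> bool" where
  "strong_separating n E \<P> \<longleftrightarrow> (\<forall>P\<in>\<P>. is_path n E P) \<and>
     (\<forall>e\<in>E. \<forall>f\<in>E. e \<noteq> f \<longrightarrow> (\<exists>P\<in>\<P>. e \<in> P \<and> f \<notin> P))"

definition ssp :: "nat \<Rightarrow> nat set set \<Rightarrow> nat" where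
  "ssp n E = (LEAST k. \<exists>\<P>. finite \<P> \<and> card \<P> = k \<and> strong_separating n E \<P>)"

end

theory Submission
  imports Defs
begin

lemma path_card_le:
  assumes "is_path n E P"
  shows "finite P \<and> card P \<le> n"
proof -
  obtain vs where vs: "distinct vs" "set vs \<subseteq> {..<n}" "P = path_edges vs"
    using assms unfolding is_path_def by blast
  have "card P \<le> length (map (\<lambda>(u, v). {u, v}) (zip vs (tl vs)))"
    unfolding vs(3) path_edges_def by (rule card_length)
  also have "\<dots> \<le> length vs" by simp
  also have "\<dots> = card (set vs)" using vs(1) by (simp add: distinct_card)
  also have "\<dots> \<le> n" using vs(2) by (metis card_lessThan card_mono finite_lessThan)
  finally show ?thesis using vs(3) by (simp add: path_edges_def)
qed

lemma simple_graph_finite: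
  assumes "simple_graph n E" shows "finite E"
proof -
  have "E \<subseteq> Pow {..<n}" using assms unfolding simple_graph_def by fastforce
  then show ?thesis by (meson finite_Pow_iff finite_lessThan finite_subset)
qed

lemma comb_bound:
  assumes G: "simple_graph n E" and fin: "finite \<P>" and sep: "strong_separating n E \<P>"
  shows "3 * card E \<le> card \<P> * n + 3 + 2 * card \<P> + (card \<P> choose 2)"
proof -
  define k where "k = card \<P>"
  define S where "S e = {P\<in>\<P>. e \<in> P}" for e
  have finE: "finite E" using G by (rule simple_graph_finite)
  have paths: "\<And>P. P \<in> \<P> \<Longrightarrow> finite P \<and> card P \<le> n"
    using sep path_card_le unfolding strong_separating_def by blast
  have inj: "inj_on S E"
  proof (rule inj_onI)
    fix e f assume "e \<in> E" "f \<in> E" "S e = S f"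
    show "e = f"
    proof (rule ccontr)
      assume "e \<noteq> f"
      then obtain P where "P \<in> \<P>" "e \<in> P" "f \<notin> P"
        using sep \<open>e \<in> E\<close> \<open>f \<in> E\<close> unfolding strong_separating_def by blast
      then have "P \<in> S e" "P \<notin> S f" unfolding S_def by auto
      then show False using \<open>S e = S f\<close> by simp
    qed
  qed
  have Ssub: "S e \<subseteq> \<P>" for e unfolding S_def by auto
  define E0 where "E0 = {e\<in>E. card (S e) = 0}"
  define E1 where "E1 = {e\<in>E. card (S e) = 1}"
  define E2 where "E2 = {e\<in>E. card (S e) = 2}"
  have "card E0 \<le> card {A. A \<subseteq> \<P> \<and> card A = 0}"
    by (rule card_inj_on_le[where f=S]) (use inj Ssub fin in \<open>auto simp: E0_def intro: inj_on_subset\<close>)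
  also have "\<dots> = k choose 0" unfolding k_def by (rule n_subsets[OF fin])
  finally have c0: "card E0 \<le> 1" by simp
  have "card E1 \<le> card {A. A \<subseteq> \<P> \<and> card A = 1}"
    by (rule card_inj_on_le[where f=S]) (use inj Ssub fin in \<open>auto simp: E1_def intro: inj_on_subset\<close>)
  also have "\<dots> = k choose 1" unfolding k_def by (rule n_subsets[OF fin])
  finally have c1: "card E1 \<le> k" by simp
  have "card E2 \<le> card {A. A \<subseteq> \<P> \<and> card A = 2}"
    by (rule card_inj_on_le[where f=S]) (use inj Ssub fin in \<open>auto simp: E2_def intro: inj_on_subset\<close>)
  also have "\<dots> = k choose 2" unfolding k_def by (rule n_subsets[OF fin])
  finally have c2: "card E2 \<le> k choose 2" .
  have dc: "(\<Sum>e\<in>E. card (S e)) = (\<Sum>P\<in>\<P>. card {e\<in>E. e \<in> P})"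
  proof -
    have "(\<Sum>e\<in>E. card (S e)) = (\<Sum>e\<in>E. \<Sum>P\<in>\<P>. of_bool (e \<in> P))"
      using fin by (simp add: S_def Int_def conj_commute)
    also have "\<dots> = (\<Sum>P\<in>\<P>. \<Sum>e\<in>E. of_bool (e \<in> P))" by (rule sum.swap)
    also have "\<dots> = (\<Sum>P\<in>\<P>. card {e\<in>E. e \<in> P})"
      using finE by (simp add: Int_def)
    finally show ?thesis .
  qed
  also have "\<dots> \<le> (\<Sum>P\<in>\<P>. n)"
  proof (rule sum_mono)
    fix P assume "P \<in> \<P>"
    then have "finite P" "card P \<le> n" using paths by auto
    then show "card {e\<in>E. e \<in> P} \<le> n"
    proof -
      have "card {e\<in>E. e \<in> P} \<le> card P" by (rule card_mono) (use \<open>finite P\<close> in auto)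
      then show ?thesis using \<open>card P \<le> n\<close> by linarith
    qed
  qed
  also have "\<dots> = k * n" by (simp add: k_def)
  finally have sumS: "(\<Sum>e\<in>E. card (S e)) \<le> k * n" .
  have pt: "3 \<le> card (S e) + 3 * of_bool (e \<in> E0) + 2 * of_bool (e \<in> E1) + of_bool (e \<in> E2)"
    if "e \<in> E" for e
    using that by (auto simp: E0_def E1_def E2_def)
  have "3 * card E = (\<Sum>e\<in>E. 3::nat)" by simp
  also have "\<dots> \<le> (\<Sum>e\<in>E. card (S e) + 3 * of_bool (e \<in> E0) + 2 * of_bool (e \<in> E1) + of_bool (e \<in> E2))"
    by (rule sum_mono) (rule pt)
  also have "\<dots> = (\<Sum>e\<in>E. card (S e)) + 3 * card E0 + 2 * card E1 + card E2"
    using finE by (simp add: sum.distrib sum_distrib_left[symmetric] Int_absorb1 E0_def E1_def E2_def Int_def conj_commute)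
  also have "\<dots> \<le> k * n + 3 + 2 * k + (k choose 2)"
    using sumS c0 c1 c2 by linarith
  finally show ?thesis unfolding k_def .
qed

lemma real_choose2: "2 * real (k choose 2) = real k * (real k - 1)"
proof (cases k)
  case 0 then show ?thesis by simp
next
  case (Suc j)
  have "k * (k - 1) = 2 * (k choose 2)"
    unfolding choose_two by (simp add: Suc)
  then have "real (k * (k - 1)) = 2 * real (k choose 2)" by (metis of_nat_mult of_nat_numeral)
  then show ?thesis using Suc by (simp add: of_nat_diff algebra_simps)
qed

lemma real_bound:
  fixes \<alpha> \<epsilon> n k :: real
  assumes a: "0 < \<alpha>" "\<alpha> \<le> 1" "0 < \<epsilon>" "\<epsilon> \<le> 1" and n: "1 \<le> n" and k: "0 \<le> k"
    and big: "12 < \<epsilon> * n"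
    and h: "3 * \<alpha> * n * (n - 1) \<le> 2 * k * n + 6 + 4 * k + k * (k - 1)"
  shows "(sqrt (3 * \<alpha> + 1) - 1 - \<epsilon>) * n \<le> k"
proof (rule ccontr)
  define s where "s = sqrt (3 * \<alpha> + 1)"
  have s2: "s^2 = 3 * \<alpha> + 1" unfolding s_def using a by simp
  have s1: "1 \<le> s" unfolding s_def using a by simp
  have s2le: "s \<le> 2" unfolding s_def using a by (simp add: real_sqrt_le_iff[of _ 4, simplified] )
  assume "\<not> (sqrt (3 * \<alpha> + 1) - 1 - \<epsilon>) * n \<le> k"
  then have kl: "k < (s - 1 - \<epsilon>) * n" unfolding s_def by simp
  have kn: "k < n"
  proof -
    have "(s - 1 - \<epsilon>) * n \<le> 1 * n" using s2le a n by (intro mult_right_mono) auto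
    then show ?thesis using kl by simp
  qed
  have pos: "0 \<le> k + n" using k n by simp
  have lt: "k + n < (s - \<epsilon>) * n" using kl by (simp add: algebra_simps)
  have sq: "(k + n)^2 < ((s - \<epsilon>) * n)^2"
    using power_strict_mono[OF lt pos, of 2] by simp
  have e: "(s - \<epsilon>)^2 \<le> s^2 - \<epsilon>"
  proof -
    have "\<epsilon> * 1 \<le> \<epsilon> * (2 * s - \<epsilon>)" using a s1 by (intro mult_left_mono) auto
    then show ?thesis by (simp add: power2_eq_square algebra_simps)
  qed
  have "((s - \<epsilon>) * n)^2 \<le> (s^2 - \<epsilon>) * n^2"
    using mult_right_mono[OF e, of "n^2"] by (simp add: power_mult_distrib)
  with sq have A: "(k + n)^2 < (3 * \<alpha> + 1 - \<epsilon>) * n^2" using s2 by simp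
  have B: "(k + n)^2 \<ge> (3 * \<alpha> + 1) * n^2 - 3 * \<alpha> * n - 3 * k - 6"
    using h by (simp add: power2_eq_square algebra_simps)
  have "\<epsilon> * n^2 < 3 * \<alpha> * n + 3 * k + 6" using A B by (simp add: algebra_simps)
  also have "\<dots> \<le> 12 * n"
  proof -
    have "\<alpha> * n \<le> 1 * n" using a n by (intro mult_right_mono) auto
    then show ?thesis using kn n by linarith
  qed
  finally have "(\<epsilon> * n) * n < 12 * n" by (simp add: power2_eq_square algebra_simps)
  then have "\<epsilon> * n < 12" using n by simp
  then show False using big by simp
qed

theorem proposition2p2:
  fixes \<alpha> \<epsilon> :: real
  assumes "0 < \<alpha>" "\<alpha> \<le> 1" "0 < \<epsilon>" "\<epsilon> \<le> 1"
  shows "\<exists>n0::nat. \<forall>n\<ge>n0. \<forall>E. simple_graph n E \<and> real (card E) = \<alpha> * real (n choose 2) \<longrightarrow>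
           real (ssp n E) \<ge> (sqrt (3 * \<alpha> + 1) - 1 - \<epsilon>) * real n"
proof (intro exI allI impI)
  fix n :: nat and E
  assume nge: "nat \<lceil>12 / \<epsilon>\<rceil> + 1 \<le> n"
  assume GE: "simple_graph n E \<and> real (card E) = \<alpha> * real (n choose 2)"
  have G: "simple_graph n E" using GE by simp
  have n1: "1 \<le> real n" using nge by simp
  have "12 / \<epsilon> < real n"
  proof -
    have "12 / \<epsilon> \<le> real (nat \<lceil>12 / \<epsilon>\<rceil>)" by linarith
    then show ?thesis using nge by linarith
  qed
  then have big: "12 < \<epsilon> * real n" using assms by (simp add: field_simps)
  have ex: "\<exists>\<P>. finite \<P> \<and> card \<P> = card ((\<lambda>e. {e}) ` E) \<and> strong_separating n E \<P>"
  proof (intro exI conjI)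
    show "finite ((\<lambda>e. {e}) ` E)" using simple_graph_finite[OF G] by simp
    show "strong_separating n E ((\<lambda>e. {e}) ` E)"
      unfolding strong_separating_def
    proof (intro conjI ballI impI)
      fix P assume "P \<in> (\<lambda>e. {e}) ` E"
      then obtain e where e: "e \<in> E" "P = {e}" by auto
      then obtain u v where uv: "u < n" "v < n" "u \<noteq> v" "e = {u, v}"
        using G unfolding simple_graph_def by blast
      show "is_path n E P" unfolding is_path_def
        by (rule exI[of _ "[u, v]"]) (use e uv in \<open>auto simp: path_edges_def\<close>)
    next
      fix e f assume "e \<in> E" "f \<in> E" "e \<noteq> f"
      then show "\<exists>P\<in>(\<lambda>e. {e}) ` E. e \<in> P \<and> f \<notin> P" by auto
    qed
  qed simp
  then have ex2: "\<exists>k. \<exists>\<P>. finite \<P> \<and> card \<P> = k \<and> strong_separating n E \<P>" by blast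
  have "\<exists>\<P>. finite \<P> \<and> card \<P> = ssp n E \<and> strong_separating n E \<P>"
    unfolding ssp_def by (rule LeastI_ex[OF ex2])
  then obtain \<P> where P: "finite \<P>" "card \<P> = ssp n E" "strong_separating n E \<P>"
    by blast
  have cb: "3 * card E \<le> card \<P> * n + 3 + 2 * card \<P> + (card \<P> choose 2)"
    by (rule comb_bound[OF G P(1) P(3)])
  define k where "k = real (card \<P>)"
  have "real (3 * card E) \<le> real (card \<P> * n + 3 + 2 * card \<P> + (card \<P> choose 2))"
    using cb by (simp only: of_nat_le_iff)
  then have "3 * real (card E) \<le> k * n + 3 + 2 * k + real (card \<P> choose 2)"
    by (simp add: k_def)
  then have "2 * (3 * real (card E)) \<le> 2 * (k * n + 3 + 2 * k) + 2 * real (card \<P> choose 2)"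
    by (smt (verit))
  then have "2 * (3 * real (card E)) \<le> 2 * (k * n + 3 + 2 * k) + k * (k - 1)"
    using real_choose2[of "card \<P>"] by (simp add: k_def)
  moreover have "2 * real (card E) = \<alpha> * (real n * (real n - 1))"
    using GE real_choose2[of n] by simp
  then have "3 * \<alpha> * real n * (real n - 1) = 2 * (3 * real (card E))"
    by (simp add: algebra_simps)
  ultimately have h: "3 * \<alpha> * real n * (real n - 1) \<le> 2 * k * real n + 6 + 4 * k + k * (k - 1)"
    by (simp add: algebra_simps)
  have "(sqrt (3 * \<alpha> + 1) - 1 - \<epsilon>) * n \<le> k"
    by (rule real_bound[OF assms n1 _ big h]) (simp add: k_def)
  then show "real (ssp n E) \<ge> (sqrt (3 * \<alpha> + 1) - 1 - \<epsilon>) * real n"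
    using P(2) k_def by simp
qed

end
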